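(* Let $G$ be a locally compact group with Haar measure $\nu$ and $U$ an open symmetric relatively compact neighborhood of the identity. For every $n\in\mathbb N$ there exists a regular compact set $K$ with $U^n\subseteq K\subseteq U^{n+1}$ and $\nu(\partial K)=0$.
   Context: A compact set is regular if it equals the closure of its interior. $\partial K$ is the topological boundary of $K$; $U^m$ is the set of products of $m$ elements of $U$. *)

theory Defs
  imports "HOL-Analysis.Analysis"
begin

definition topgroup_on :: "('a::t2_space \<Rightarrow> 'a \<Rightarrow> 'a) \<Rightarrow> ('a \<Rightarrow> 'a) \<Rightarrow> 'a \<Rightarrow> bool" where
  "topgroup_on m i e \<longleftrightarrow>
     (\<forall>x y z. m (m x y) z = m x (m y z)) \<and>
     (\<forall>x. m e x = x \<and> m x e = x) \<and>
     (\<forall>x. m (i x) x = e \<and> m x (i x) = e) \<and>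
     continuous_on UNIV (\<lambda>p. m (fst p) (snd p)) \<and>
     continuous_on UNIV i"

definition lc_topgroup :: "('a::t2_space \<Rightarrow> 'a \<Rightarrow> 'a) \<Rightarrow> ('a \<Rightarrow> 'a) \<Rightarrow> 'a \<Rightarrow> bool" where
  "lc_topgroup m i e \<longleftrightarrow>
     topgroup_on m i e \<and> (\<forall>x::'a. \<exists>C. compact C \<and> x \<in> interior C)"

definition left_haar_measure :: "('a::t2_space \<Rightarrow> 'a \<Rightarrow> 'a) \<Rightarrow> 'a measure \<Rightarrow> bool" where
  "left_haar_measure m \<nu> \<longleftrightarrow>
     sets \<nu> = sets borel \<and>
     (\<forall>g A. A \<in> sets borel \<longrightarrow> emeasure \<nu> (m g ` A) = emeasure \<nu> A) \<and>
     (\<forall>C. compact C \<longrightarrow> emeasure \<nu> C < \<infinity>) \<and>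
     (\<forall>V. open V \<and> V \<noteq> {} \<longrightarrow> emeasure \<nu> V > 0) \<and>
     (\<forall>A \<in> sets borel. emeasure \<nu> A = (INF V \<in> {V. open V \<and> A \<subseteq> V}. emeasure \<nu> V)) \<and>
     (\<forall>V. open V \<longrightarrow> emeasure \<nu> V = (SUP C \<in> {C. compact C \<and> C \<subseteq> V}. emeasure \<nu> C))"

fun set_power :: "('a \<Rightarrow> 'a \<Rightarrow> 'a) \<Rightarrow> 'a \<Rightarrow> 'a set \<Rightarrow> nat \<Rightarrow> 'a set" where
  "set_power m e U 0 = {e}"
| "set_power m e U (Suc n) = {m x y | x y. x \<in> set_power m e U n \<and> y \<in> U}"

definition regular_compact :: "'a::topological_space set \<Rightarrow> bool" where
  "regular_compact K \<longleftrightarrow> compact K \<and> K = closure (interior K)"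

end

theory Submission
  imports Defs
begin

lemma cont_left:
  assumes "topgroup_on m i e" shows "continuous_on UNIV (m a)"
proof -
  have c: "continuous_on UNIV (\<lambda>p. m (fst p) (snd p))" using assms unfolding topgroup_on_def by blast
  have "continuous_on UNIV ((\<lambda>p. m (fst p) (snd p)) \<circ> (\<lambda>y. (a, y)))"
    by (rule continuous_on_compose) (auto intro!: continuous_intros continuous_on_subset[OF c])
  then show ?thesis by (simp add: o_def)
qed

lemma left_image_eq:
  assumes "topgroup_on m i e" shows "m x ` A = (m (i x)) -` A"
proof -
  have as: "\<And>x y z. m (m x y) z = m x (m y z)" and id: "\<And>x. m e x = x" 
    and inv: "\<And>x. m (i x) x = e \<and> m x (i x) = e" using assms unfolding topgroup_on_def by auto
  show ?thesis
  proof (intro set_eqI iffI)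
    fix y assume "y \<in> m x ` A" then obtain u where "u \<in> A" "y = m x u" by auto
    then show "y \<in> m (i x) -` A" by (simp add: as[symmetric] inv id)
  next
    fix y assume "y \<in> m (i x) -` A"
    moreover have "y = m x (m (i x) y)" by (simp add: as[symmetric] inv id)
    ultimately show "y \<in> m x ` A" by auto
  qed
qed

lemma open_left_image:
  assumes "topgroup_on m i e" "open A" shows "open (m x ` A)"
  using left_image_eq[OF assms(1)] cont_left[OF assms(1)] assms(2)
  by (metis open_vimage)

lemma set_power_Suc_UN: "set_power m e U (Suc n) = (\<Union>x\<in>set_power m e U n. m x ` U)"
  by auto

lemma open_set_power_Suc:
  assumes "topgroup_on m i e" "open U" shows "open (set_power m e U (Suc n))"
  unfolding set_power_Suc_UN using open_left_image[OF assms] by blast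

lemma set_power_mono: "U \<subseteq> V \<Longrightarrow> set_power m e U n \<subseteq> set_power m e V n"
  by (induction n) auto

lemma compact_set_power:
  assumes "topgroup_on m i e" "compact U" shows "compact (set_power m e U n)"
proof (induction n)
  case 0 then show ?case by simp
next
  case (Suc n)
  have c: "continuous_on UNIV (\<lambda>p. m (fst p) (snd p))" using assms unfolding topgroup_on_def by blast
  have "set_power m e U (Suc n) = (\<lambda>p. m (fst p) (snd p)) ` (set_power m e U n \<times> U)"
  proof (intro set_eqI iffI)
    fix z assume "z \<in> set_power m e U (Suc n)"
    then obtain x y where "z = m x y" "x \<in> set_power m e U n" "y \<in> U" by auto
    then show "z \<in> (\<lambda>p. m (fst p) (snd p)) ` (set_power m e U n \<times> U)"
      by (intro image_eqI[of _ _ "(x,y)"]) auto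
  qed force
  moreover have "compact ((\<lambda>p. m (fst p) (snd p)) ` (set_power m e U n \<times> U))"
    by (rule compact_continuous_image[OF continuous_on_subset[OF c]]) (auto intro: compact_Times Suc assms(2))
  ultimately show ?case by simp
qed

lemma closure_set_power:
  assumes "topgroup_on m i e" "open U" "e \<in> U" "i ` U = U"
  shows "closure (set_power m e U n) \<subseteq> set_power m e U (Suc n)"
proof
  have as: "\<And>x y z. m (m x y) z = m x (m y z)" and id: "\<And>x. m x e = x" 
    and inv: "\<And>x. m (i x) x = e \<and> m x (i x) = e" using assms unfolding topgroup_on_def by auto
  fix x assume x: "x \<in> closure (set_power m e U n)"
  have "open (m x ` U)" by (rule open_left_image[OF assms(1,2)])
  moreover have "x \<in> m x ` U" using assms(3) id by (metis image_eqI)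
  ultimately have "set_power m e U n \<inter> m x ` U \<noteq> {}"
    using x unfolding closure_iff_nhds_not_empty by blast
  then obtain s where s: "s \<in> m x ` U" "s \<in> set_power m e U n" by blast
  then obtain u where u: "u \<in> U" "s = m x u" by auto
  have "i u \<in> U" using u assms(4) by auto
  moreover have "x = m s (i u)" using u by (simp add: as inv id)
  ultimately show "x \<in> set_power m e U (Suc n)" using s(2) by auto
qed

lemma hausdorff_eu: "Hausdorff_space (euclidean :: 'a::t2_space topology)"
  unfolding Hausdorff_space_def by (simp add: disjnt_def) (meson hausdorff)

theorem proposition5:
  fixes m :: "'a::t2_space \<Rightarrow> 'a \<Rightarrow> 'a" and i :: "'a \<Rightarrow> 'a" and e :: 'a
    and \<nu> :: "'a measure" and U :: "'a set" and n :: nat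
  assumes "lc_topgroup m i e"
    and "left_haar_measure m \<nu>"
    and "open U" and "e \<in> U" and "i ` U = U" and "compact (closure U)"
  shows "\<exists>K. regular_compact K \<and> set_power m e U n \<subseteq> K \<and> K \<subseteq> set_power m e U (Suc n)
             \<and> emeasure \<nu> (frontier K) = 0"
proof -
  have tg: "topgroup_on m i e" using assms(1) unfolding lc_topgroup_def by blast
  have sets: "sets \<nu> = sets borel" and fin: "\<And>C. compact C \<Longrightarrow> emeasure \<nu> C < \<infinity>"
    using assms(2) unfolding left_haar_measure_def by auto
  define W where "W = set_power m e U (Suc n)"
  define C where "C = closure (set_power m e U n)"
  define X where "X = closure W"
  have cpt: "compact (set_power m e (closure U) k)" for k
    by (rule compact_set_power[OF tg assms(6)])
  have cpt2: "compact (closure (set_power m e U k))" for k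
  proof -
    have "closure (set_power m e U k) \<subseteq> set_power m e (closure U) k"
      by (metis closure_minimal closure_subset compact_imp_closed cpt set_power_mono)
    then show ?thesis by (metis closed_closure compact_Int_closed cpt inf.absorb_iff2)
  qed
  have oW: "open W" unfolding W_def by (rule open_set_power_Suc[OF tg assms(3)])
  have cX: "compact X" unfolding X_def W_def by (rule cpt2)
  have cC: "compact C" unfolding C_def by (rule cpt2)
  have CW: "C \<subseteq> W" unfolding C_def W_def by (rule closure_set_power[OF tg assms(3-5)])
  have WX: "W \<subseteq> X" unfolding X_def by (rule closure_subset)
  have clX: "closed X" unfolding X_def by simp
  have "normal_space (top_of_set X)"
    by (rule compact_Hausdorff_or_regular_imp_normal_space)
       (auto simp: cX compact_space_subtopology Hausdorff_space_subtopology hausdorff_eu)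
  moreover have "closedin (top_of_set X) C"
    using CW WX cC by (simp add: closed_subset compact_imp_closed)
  moreover have "closedin (top_of_set X) (X - W)"
    using oW clX by (simp add: closedin_closed_Int Diff_eq open_closed)
  moreover have "disjnt C (X - W)" using CW by (auto simp: disjnt_def)
  ultimately obtain g :: "'a \<Rightarrow> real" where g: "continuous_map (top_of_set X) euclideanreal g"
    "g ` C \<subseteq> {1}" "g ` (X - W) \<subseteq> {0}"
    by (rule Urysohn_lemma_alt)
  have gc: "continuous_on X g" using g(1) by simp
  have "\<exists>t\<in>{0<..<1::real}. emeasure \<nu> {x\<in>X. g x = t} = 0"
  proof -
    have Xs: "X \<in> sets \<nu>" using clX sets by simp
    define N where "N = distr (restrict_space \<nu> X) borel g"
    have gm: "g \<in> borel_measurable (restrict_space \<nu> X)"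
    proof -
      have "g \<in> borel_measurable (restrict_space borel X)"
        by (rule borel_measurable_continuous_on_restrict[OF gc])
      moreover have "sets (restrict_space \<nu> X) = sets (restrict_space borel X)"
        using sets by (rule sets_restrict_space_cong)
      ultimately show ?thesis using measurable_cong_sets[of "restrict_space \<nu> X" "restrict_space borel X" borel borel] by metis
    qed
    have em: "emeasure N A = emeasure \<nu> (g -` A \<inter> X)" if "A \<in> sets borel" for A
    proof -
      have "emeasure N A = emeasure (restrict_space \<nu> X) (g -` A \<inter> space (restrict_space \<nu> X))"
        unfolding N_def using gm that by (rule emeasure_distr)
      also have "\<dots> = emeasure \<nu> (g -` A \<inter> X)"
      proof -
        have sp: "space \<nu> = UNIV" using sets by (metis sets_eq_imp_space_eq space_borel)
        have "space (restrict_space \<nu> X) = X" by (simp add: space_restrict_space sp)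
        moreover have "emeasure (restrict_space \<nu> X) (g -` A \<inter> X) = emeasure \<nu> (g -` A \<inter> X)"
          by (rule emeasure_restrict_space) (auto simp: sp Xs)
        ultimately show ?thesis by simp
      qed
      finally show ?thesis .
    qed
    have "finite_measure N"
    proof
      have "emeasure N (space N) = emeasure \<nu> X" using em[of UNIV] by (simp add: N_def)
      then show "emeasure N (space N) \<noteq> \<infinity>" using fin[OF cX] by simp
    qed
    then have "countable {x. measure N {x} \<noteq> 0}" by (rule finite_measure.countable_support)
    then obtain t where t: "t \<in> {0<..<1::real}" "t \<notin> {x. measure N {x} \<noteq> 0}"
      using open_minus_countable[OF \<open>countable {x. measure N {x} \<noteq> 0}\<close>, of "{0<..<1::real}"] by auto
    have "emeasure N {t} = 0"
      using t(2) \<open>finite_measure N\<close> by (simp add: finite_measure.emeasure_eq_measure)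
    then have "emeasure \<nu> (g -` {t} \<inter> X) = 0" using em[of "{t}"] by simp
    moreover have "g -` {t} \<inter> X = {x\<in>X. g x = t}" by auto
    ultimately show ?thesis using t(1) by auto
  qed
  then obtain t where t: "0 < t" "t < 1" and null: "emeasure \<nu> {x\<in>X. g x = t} = 0" by auto
  define D where "D = {x\<in>X. g x > t}"
  define F where "F = {x\<in>X. g x \<ge> t}"
  define K where "K = closure D"
  have "\<exists>A. open A \<and> A \<inter> X = g -` {t<..} \<inter> X"
    using gc unfolding continuous_on_open_invariant by (meson open_greaterThan)
  then obtain A where A: "open A" "A \<inter> X = g -` {t<..} \<inter> X" by blast
  have DW: "D \<subseteq> W" using g(3) t unfolding D_def by force
  have "D = A \<inter> W" using A DW WX unfolding D_def by auto
  then have oD: "open D" using A oW by auto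
  have "X \<inter> g -` {t..} = F" by (auto simp: F_def)
  then have clF: "closed F" 
    using continuous_closed_preimage[OF gc clX, of "{t..}"] by simp
  have DF: "D \<subseteq> F" unfolding D_def F_def by auto
  have FW: "F \<subseteq> W" using g(3) t unfolding F_def by force
  have FX: "F \<subseteq> X" unfolding F_def by auto
  have KF: "K \<subseteq> F" unfolding K_def using DF clF by (rule closure_minimal)
  have intK: "D \<subseteq> interior K" unfolding K_def using oD by (simp add: interior_maximal closure_subset)
  have reg: "regular_compact K"
    unfolding regular_compact_def
  proof
    have "K \<subseteq> X" using KF FX by blast
    moreover have "closed K" by (simp add: K_def)
    ultimately show "compact K" using compact_Int_closed[OF cX, of K] by (simp add: inf_absorb2)
    show "K = closure (interior K)"
    proof
      show "K \<subseteq> closure (interior K)" using closure_mono[OF intK] by (simp add: K_def)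
      show "closure (interior K) \<subseteq> K" unfolding K_def
        by (rule closure_minimal[OF interior_subset closed_closure])
    qed
  qed
  have "set_power m e U n \<subseteq> C" unfolding C_def by (rule closure_subset)
  also have "C \<subseteq> D"
  proof
    fix x assume x: "x \<in> C"
    then have "g x = 1" using g(2) by auto
    moreover have "x \<in> X" using x CW WX by auto
    ultimately show "x \<in> D" using t by (simp add: D_def)
  qed
  also have "D \<subseteq> K" unfolding K_def by (rule closure_subset)
  finally have s1: "set_power m e U n \<subseteq> K" .
  have s2: "K \<subseteq> set_power m e U (Suc n)" using KF FW unfolding W_def by (rule order_trans)
  have "frontier K = K - interior K" unfolding frontier_def K_def by simp
  also have "\<dots> \<subseteq> F - D" using KF intK by blast
  also have "\<dots> \<subseteq> {x\<in>X. g x = t}" unfolding F_def D_def by auto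
  finally have fr: "frontier K \<subseteq> {x\<in>X. g x = t}" .
  have "closed {x\<in>X. g x = t}" by (rule continuous_closed_preimage_constant[OF gc clX])
  then have "emeasure \<nu> (frontier K) \<le> emeasure \<nu> {x\<in>X. g x = t}"
    by (intro emeasure_mono[OF fr]) (simp add: sets)
  then have "emeasure \<nu> (frontier K) = 0" using null by simp
  then show ?thesis using reg s1 s2 by blast
qed

end
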